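(* Let $J\subseteq\{1,\dots,n\}$ and for each pair $j<j'$ in $J$ let $t^+_{jj'},t^-_{jj'}$ be non-negative integers. Set $$\phi=\prod_{j,j'\in J,\ j<j'}(x_j-x_{j'})^{2t^+_{jj'}}(x_j+x_{j'})^{2t^-_{jj'}},\qquad \psi=\prod_{j,j'\in J,\ j<j'}(x_jx_{j'})^{t^+_{jj'}+t^-_{jj'}}.$$ Then for every nonzero homogeneous polynomial $R\in\mathbb{C}[x_1,\dots,x_n]$ there exists a monomial $x^K\in\mathrm{mon}(R)$ such that $\langle\phi\,x^K,\psi R\rangle\neq0$.
   Context: For $K\in\mathbb{N}^n$, $x^K=\prod_{i=1}^nx_i^{K(i)}$ and $K!=\prod_iK(i)!$; $\mathrm{coe}(x^K,f)$ is the coefficient of $x^K$ in $f$, and $\mathrm{mon}(f)$ is the set of monomials $x^K$ with $\mathrm{coe}(x^K,f)\ne0$. For homogeneous polynomials $f,g$ of the same degree $m$, $\langle f,g\rangle=\sum_{K\in\mathbb{N}^n,\ \sum_iK(i)=m}K!\,\mathrm{coe}(x^K,f)\overline{\mathrm{coe}(x^K,g)}$. *)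

theory Defs
  imports Complex_Main "HOL-Library.Poly_Mapping"
begin

text \<open>Multivariate complex polynomials in variables x_0, x_1, ... represented as finitely
supported maps from exponent vectors (monomials) to coefficients.\<close>

type_synonym monomial = "nat \<Rightarrow>\<^sub>0 nat"
type_synonym cpoly = "monomial \<Rightarrow>\<^sub>0 complex"

definition Var :: "nat \<Rightarrow> cpoly" where
  "Var i = Poly_Mapping.single (Poly_Mapping.single i 1) 1"

definition monom_poly :: "monomial \<Rightarrow> cpoly" where
  "monom_poly K = Poly_Mapping.single K 1"

definition coe :: "monomial \<Rightarrow> cpoly \<Rightarrow> complex" where
  "coe K f = Poly_Mapping.lookup f K"

definition mon :: "cpoly \<Rightarrow> monomial set" where
  "mon f = Poly_Mapping.keys f"

definition tdeg :: "monomial \<Rightarrow> nat" where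
  "tdeg K = (\<Sum>i\<in>Poly_Mapping.keys K. Poly_Mapping.lookup K i)"

definition mfact :: "monomial \<Rightarrow> nat" where
  "mfact K = (\<Prod>i\<in>Poly_Mapping.keys K. fact (Poly_Mapping.lookup K i))"

definition homogeneous :: "cpoly \<Rightarrow> bool" where
  "homogeneous f \<longleftrightarrow> (\<exists>m. \<forall>K\<in>mon f. tdeg K = m)"

definition in_vars :: "nat \<Rightarrow> cpoly \<Rightarrow> bool" where
  "in_vars n f \<longleftrightarrow> (\<forall>K\<in>mon f. Poly_Mapping.keys K \<subseteq> {1..n})"

text \<open>Only monomials in mon f \<union> mon g
contribute, so the sum is taken over this finite set (for homogeneous f, g of the same
degree m this is exactly the sum over all K of total degree m).\<close>
definition pinner :: "cpoly \<Rightarrow> cpoly \<Rightarrow> complex" where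
  "pinner f g = (\<Sum>K\<in>mon f \<union> mon g. of_nat (mfact K) * coe K f * cnj (coe K g))"

definition pairsJ :: "nat set \<Rightarrow> (nat \<times> nat) set" where
  "pairsJ J = {(j, j'). j \<in> J \<and> j' \<in> J \<and> j < j'}"

definition phi_poly :: "nat set \<Rightarrow> (nat \<Rightarrow> nat \<Rightarrow> nat) \<Rightarrow> (nat \<Rightarrow> nat \<Rightarrow> nat) \<Rightarrow> cpoly" where
  "phi_poly J tp tm = (\<Prod>(j, j')\<in>pairsJ J.
      (Var j - Var j') ^ (2 * tp j j') * (Var j + Var j') ^ (2 * tm j j'))"

definition psi_poly :: "nat set \<Rightarrow> (nat \<Rightarrow> nat \<Rightarrow> nat) \<Rightarrow> (nat \<Rightarrow> nat \<Rightarrow> nat) \<Rightarrow> cpoly" where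
  "psi_poly J tp tm = (\<Prod>(j, j')\<in>pairsJ J. (Var j * Var j') ^ (tp j j' + tm j j'))"

end

theory Submission
  imports Defs
begin

abbreviation lk :: "cpoly \<Rightarrow> monomial \<Rightarrow> complex" where "lk \<equiv> Poly_Mapping.lookup"

lemma lookup_single_mult_shift:
  "lk (Poly_Mapping.single A c * f) (A + M) = c * lk f M"
  by (simp add: lookup_mult lookup_single mult_when when_mult Sum_any_when_equal)

lemma lookup_single_mult_out:
  assumes "\<not> (\<exists>M. K = A + M)"
  shows "lk (Poly_Mapping.single A c * f) K = 0"
proof -
  have "K \<notin> Poly_Mapping.keys (Poly_Mapping.single A c * f)"
    using keys_mult[of "Poly_Mapping.single A c" f] assms
    by (auto split: if_splits)
  thus ?thesis by (simp add: in_keys_iff)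
qed

lemma lookup_single0_mult: "lk (Poly_Mapping.single 0 c * f) M = c * lk f M"
  using lookup_single_mult_shift[of 0 c f M] by simp

lemma keys_single_mult: "Poly_Mapping.keys (Poly_Mapping.single A c * f) \<subseteq> (\<lambda>M. A + M) ` Poly_Mapping.keys f"
  using keys_mult[of "Poly_Mapping.single A c" f] by (auto split: if_splits)

definition ip :: "cpoly \<Rightarrow> cpoly \<Rightarrow> complex" where
  "ip f g = (\<Sum>M\<in>Poly_Mapping.keys f. lk f M * cnj (lk g M))"

lemma ip_super:
  assumes "finite U" "Poly_Mapping.keys f \<subseteq> U"
  shows "ip f g = (\<Sum>M\<in>U. lk f M * cnj (lk g M))"
  unfolding ip_def
  by (rule sum.mono_neutral_left) (use assms in \<open>auto simp: in_keys_iff\<close>)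

lemma ip_add1: "ip (f + h) g = ip f g + ip h g"
proof -
  let ?U = "Poly_Mapping.keys f \<union> Poly_Mapping.keys h"
  have "Poly_Mapping.keys (f + h) \<subseteq> ?U" by (rule keys_add)
  then show ?thesis
    by (simp add: ip_super[of ?U] lookup_add distrib_right sum.distrib)
qed

lemma ip_diff1: "ip (f - h) g = ip f g - ip h g"
proof -
  let ?U = "Poly_Mapping.keys f \<union> Poly_Mapping.keys h"
  have "Poly_Mapping.keys (f - h) \<subseteq> ?U" by (auto simp: in_keys_iff lookup_minus)
  then show ?thesis
    by (simp add: ip_super[of ?U] lookup_minus left_diff_distrib sum_subtractf)
qed

lemma ip_add2: "ip f (g + h) = ip f g + ip f h"
  by (simp add: ip_def lookup_add distrib_left sum.distrib)

lemma ip_diff2: "ip f (g - h) = ip f g - ip f h"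
  by (simp add: ip_def lookup_minus right_diff_distrib sum_subtractf)

lemma ip_zero1 [simp]: "ip 0 g = 0" by (simp add: ip_def)

lemma ip_sum1: "finite S \<Longrightarrow> ip (sum F S) g = (\<Sum>i\<in>S. ip (F i) g)"
  by (induction S rule: finite_induct) (simp_all add: ip_add1)

lemma ip_scal1: "ip (Poly_Mapping.single 0 c * f) g = c * ip f g"
proof -
  have "Poly_Mapping.keys (Poly_Mapping.single 0 c * f) \<subseteq> Poly_Mapping.keys f"
    using keys_single_mult[of 0 c f] by simp
  then have "ip (Poly_Mapping.single 0 c * f) g = (\<Sum>M\<in>Poly_Mapping.keys f.
      lk (Poly_Mapping.single 0 c * f) M * cnj (lk g M))"
    by (intro ip_super) auto
  then show ?thesis
    by (simp add: lookup_single0_mult sum_distrib_left ip_def mult.assoc)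
qed

lemma ip_shift: "ip (Poly_Mapping.single A 1 * f) (Poly_Mapping.single A 1 * g) = ip f g"
proof -
  have "ip (Poly_Mapping.single A 1 * f) (Poly_Mapping.single A 1 * g)
     = (\<Sum>M\<in>(\<lambda>M. A + M) ` Poly_Mapping.keys f.
          lk (Poly_Mapping.single A 1 * f) M * cnj (lk (Poly_Mapping.single A 1 * g) M))"
    by (rule ip_super) (use keys_single_mult[of A 1 f] in auto)
  also have "\<dots> = (\<Sum>M\<in>Poly_Mapping.keys f.
          lk (Poly_Mapping.single A 1 * f) (A + M) * cnj (lk (Poly_Mapping.single A 1 * g) (A + M)))"
    by (subst sum.reindex) (auto simp: inj_on_def)
  also have "\<dots> = ip f g" by (simp add: lookup_single_mult_shift ip_def)
  finally show ?thesis .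
qed

lemma ip_Var: "ip (Var i * f) (Var i * g) = ip f g"
  unfolding Var_def by (rule ip_shift)

lemma ip_self_zero: "ip h h = 0 \<Longrightarrow> h = 0"
proof -
  assume a: "ip h h = 0"
  have "ip h h = complex_of_real (\<Sum>M\<in>Poly_Mapping.keys h. (cmod (lk h M))\<^sup>2)"
    unfolding ip_def of_real_sum by (rule sum.cong) (simp_all only: complex_norm_square)
  with a have "(\<Sum>M\<in>Poly_Mapping.keys h. (cmod (lk h M))\<^sup>2) = 0"
    by (simp only: of_real_eq_0_iff)
  then have "\<forall>M\<in>Poly_Mapping.keys h. (cmod (lk h M))\<^sup>2 = 0"
    by (subst (asm) sum_nonneg_eq_0_iff) auto
  then show "h = 0"
    by (intro poly_mapping_eqI) (metis in_keys_iff lookup_zero norm_eq_zero zero_eq_power2)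
qed

definition adj :: "cpoly \<Rightarrow> cpoly \<Rightarrow> complex \<Rightarrow> bool" where
  "adj l m s \<longleftrightarrow> (\<forall>f g. ip (l * f) (m * g) = s * ip f (l * g))"

lemma adj_one: "adj 1 1 1" by (simp add: adj_def)

lemma adj_mult:
  assumes "adj l1 m1 s1" "adj l2 m2 s2"
  shows "adj (l1 * l2) (m1 * m2) (s1 * s2)"
  unfolding adj_def
proof (intro allI)
  fix f g
  have "ip (l1 * l2 * f) (m1 * m2 * g) = ip (l1 * (l2 * f)) (m1 * (m2 * g))"
    by (simp add: ac_simps)
  also have "\<dots> = s1 * ip (l2 * f) (l1 * (m2 * g))"
    using assms(1) unfolding adj_def by blast
  also have "l1 * (m2 * g) = m2 * (l1 * g)" by (simp add: ac_simps)
  also have "ip (l2 * f) (m2 * (l1 * g)) = s2 * ip f (l2 * (l1 * g))"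
    using assms(2) unfolding adj_def by blast
  also have "l2 * (l1 * g) = l1 * l2 * g" by (simp add: ac_simps)
  finally show "ip (l1 * l2 * f) (m1 * m2 * g) = s1 * s2 * ip f (l1 * l2 * g)"
    by (simp add: ac_simps)
qed

lemma adj_power: "adj l m s \<Longrightarrow> adj (l ^ k) (m ^ k) (s ^ k)"
  by (induction k) (simp_all add: adj_one adj_mult)

lemma adj_prod:
  "finite S \<Longrightarrow> (\<And>p. p \<in> S \<Longrightarrow> adj (l p) (m p) (s p)) \<Longrightarrow>
    adj (prod l S) (prod m S) (prod s S)"
  by (induction S rule: finite_induct) (simp_all add: adj_one adj_mult)

lemma adj_minus: "adj (Var j - Var j') (Var j * Var j') (-1)"
  unfolding adj_def
proof (intro allI)
  fix f g
  have e: "Var j * Var j' * g = Var j * (Var j' * g)" "Var j * Var j' * g = Var j' * (Var j * g)"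
    by (simp_all add: ac_simps)
  have "ip ((Var j - Var j') * f) (Var j * Var j' * g)
      = ip (Var j * f) (Var j * Var j' * g) - ip (Var j' * f) (Var j * Var j' * g)"
    by (simp only: left_diff_distrib ip_diff1)
  also have "\<dots> = ip (Var j * f) (Var j * (Var j' * g)) - ip (Var j' * f) (Var j' * (Var j * g))"
    by (metis e)
  also have "\<dots> = ip f (Var j' * g) - ip f (Var j * g)" by (simp add: ip_Var)
  also have "\<dots> = -1 * ip f ((Var j - Var j') * g)"
    by (simp add: left_diff_distrib ip_diff2)
  finally show "ip ((Var j - Var j') * f) (Var j * Var j' * g) = -1 * ip f ((Var j - Var j') * g)" .
qed

lemma adj_plus: "adj (Var j + Var j') (Var j * Var j') 1"
  unfolding adj_def
proof (intro allI)
  fix f g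
  have e: "Var j * Var j' * g = Var j * (Var j' * g)" "Var j * Var j' * g = Var j' * (Var j * g)"
    by (simp_all add: ac_simps)
  have "ip ((Var j + Var j') * f) (Var j * Var j' * g)
      = ip (Var j * f) (Var j * Var j' * g) + ip (Var j' * f) (Var j * Var j' * g)"
    by (simp only: distrib_right ip_add1)
  also have "\<dots> = ip (Var j * f) (Var j * (Var j' * g)) + ip (Var j' * f) (Var j' * (Var j * g))"
    by (metis e)
  also have "\<dots> = ip f (Var j' * g) + ip f (Var j * g)" by (simp add: ip_Var)
  also have "\<dots> = 1 * ip f ((Var j + Var j') * g)"
    by (simp add: distrib_right ip_add2)
  finally show "ip ((Var j + Var j') * f) (Var j * Var j' * g) = 1 * ip f ((Var j + Var j') * g)" .
qed

definition is_mono :: "cpoly \<Rightarrow> bool" where "is_mono f \<longleftrightarrow> (\<exists>A. f = Poly_Mapping.single A 1)"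

lemma is_mono_mult: "is_mono f \<Longrightarrow> is_mono g \<Longrightarrow> is_mono (f * g)"
  unfolding is_mono_def by (auto simp: mult_single)

lemma is_mono_one: "is_mono 1"
  unfolding is_mono_def by (metis single_one)

lemma is_mono_power: "is_mono f \<Longrightarrow> is_mono (f ^ k)"
  by (induction k) (simp_all add: is_mono_one is_mono_mult)

lemma is_mono_prod: "finite S \<Longrightarrow> (\<And>p. p \<in> S \<Longrightarrow> is_mono (m p)) \<Longrightarrow> is_mono (prod m S)"
  by (induction S rule: finite_induct) (simp_all add: is_mono_one is_mono_mult)

lemma is_mono_Var: "is_mono (Var j)" unfolding is_mono_def Var_def by blast

lemma Var_minus_nz: "j \<noteq> j' \<Longrightarrow> Var j - Var j' \<noteq> 0"
proof
  assume "j \<noteq> j'" "Var j - Var j' = 0"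
  then have "lk (Var j - Var j') (Poly_Mapping.single j 1) = 0" by simp
  moreover have "Poly_Mapping.single j (1::nat) \<noteq> Poly_Mapping.single j' 1"
    using \<open>j \<noteq> j'\<close> by (metis lookup_single_eq lookup_single_not_eq one_neq_zero)
  ultimately show False
    by (simp add: Var_def lookup_minus lookup_single)
qed

lemma Var_plus_nz: "Var j + Var j' \<noteq> 0"
proof
  assume "Var j + Var j' = 0"
  then have "lk (Var j + Var j') (Poly_Mapping.single j 1) = 0" by simp
  then show False
    by (simp add: Var_def lookup_add lookup_single when_def split: if_splits)
qed

theorem lemma6p2:
  fixes n :: nat and J :: "nat set" and tp tm :: "nat \<Rightarrow> nat \<Rightarrow> nat" and R :: cpoly
  assumes "J \<subseteq> {1..n}"
    and "in_vars n R" and "R \<noteq> 0" and "homogeneous R"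
  shows "\<exists>K\<in>mon R. pinner (phi_poly J tp tm * monom_poly K) (psi_poly J tp tm * R) \<noteq> 0"
proof (rule ccontr)
  assume H: "\<not> ?thesis"
  define S where "S = pairsJ J"
  have finJ: "finite J" using assms(1) finite_subset by blast
  have finS: "finite S" unfolding S_def pairsJ_def
    by (rule finite_subset[of _ "J \<times> J"]) (auto simp: finJ)
  define G where "G = (\<Prod>(j, j')\<in>S. (Var j - Var j') ^ tp j j' * (Var j + Var j') ^ tm j j')"
  define eps where "eps = (\<Prod>(j, j')\<in>S. (-1::complex) ^ tp j j' * 1 ^ tm j j')"
  define psi where "psi = psi_poly J tp tm"
  define phi where "phi = phi_poly J tp tm"
  have psi_eq: "psi = (\<Prod>(j, j')\<in>S. (Var j * Var j') ^ tp j j' * (Var j * Var j') ^ tm j j')"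
    unfolding psi_def psi_poly_def S_def by (simp add: power_add)
  have phi_eq: "phi = G * G"
    unfolding phi_def phi_poly_def G_def S_def prod.distrib[symmetric]
    by (rule prod.cong) (auto simp: power_add mult_2 ac_simps)
  have adjG: "adj G psi eps"
    unfolding G_def psi_eq eps_def
  proof (rule adj_prod[OF finS], clarify)
    fix a b
    show "adj ((Var a - Var b) ^ tp a b * (Var a + Var b) ^ tm a b)
            ((Var a * Var b) ^ tp a b * (Var a * Var b) ^ tm a b) ((- 1) ^ tp a b * 1 ^ tm a b)"
      by (intro adj_mult adj_power adj_minus adj_plus)
  qed
  have eps_nz: "eps \<noteq> 0" unfolding eps_def
    using finS by (auto simp: prod_zero_iff)
  have "is_mono psi" unfolding psi_eq
    by (rule is_mono_prod[OF finS]) (auto intro!: is_mono_mult is_mono_power is_mono_Var)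
  then obtain P where P: "psi = Poly_Mapping.single P 1" unfolding is_mono_def by blast
  have G_nz: "G \<noteq> 0"
  proof
    assume "G = 0"
    then obtain p where p: "p \<in> S"
      "(case p of (j, j') \<Rightarrow> (Var j - Var j') ^ tp j j' * (Var j + Var j') ^ tm j j') = 0"
      unfolding G_def prod_zero_iff[OF finS] by blast
    then obtain j j' where "p = (j, j')" "j < j'" unfolding S_def pairsJ_def by auto
    with p(2) show False using Var_minus_nz[of j j'] Var_plus_nz[of j j'] by simp
  qed
  define c where "c K = of_nat (mfact (P + K)) * lk R K" for K
  define R' where "R' = (\<Sum>K\<in>Poly_Mapping.keys R. Poly_Mapping.single K (c K))"
  have mf: "mfact K > 0" for K unfolding mfact_def by (rule prod_pos) auto
  have lkR': "lk R' M = c M" for M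
    unfolding R'_def by (simp add: lookup_sum lookup_single when_def sum.delta c_def in_keys_iff)
  have R'_nz: "R' \<noteq> 0"
  proof
    assume "R' = 0"
    from assms(3) obtain K where "lk R K \<noteq> 0" by (metis poly_mapping_eqI lookup_zero)
    with \<open>R' = 0\<close> lkR'[of K] mf[of "P + K"] show False by (simp add: c_def)
  qed
  have pin: "pinner f (psi * R) = ip f (psi * R')" for f
  proof -
    let ?U = "Poly_Mapping.keys f \<union> Poly_Mapping.keys (psi * R)"
    have "ip f (psi * R') = (\<Sum>K\<in>?U. lk f K * cnj (lk (psi * R') K))"
      by (rule ip_super) auto
    also have "\<dots> = (\<Sum>K\<in>?U. of_nat (mfact K) * lk f K * cnj (lk (psi * R) K))"
    proof (rule sum.cong[OF refl])
      fix K
      show "lk f K * cnj (lk (psi * R') K) = of_nat (mfact K) * lk f K * cnj (lk (psi * R) K)"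
      proof (cases "\<exists>M. K = P + M")
        case True
        then obtain M where "K = P + M" by blast
        then show ?thesis unfolding P
          by (simp add: lookup_single_mult_shift lkR' c_def)
      next
        case False
        then show ?thesis unfolding P by (simp add: lookup_single_mult_out)
      qed
    qed
    finally show ?thesis unfolding pinner_def mon_def coe_def by simp
  qed
  have phiR': "phi * R' = (\<Sum>K\<in>Poly_Mapping.keys R. Poly_Mapping.single 0 (c K) * (phi * monom_poly K))"
    unfolding R'_def sum_distrib_left
    by (rule sum.cong[OF refl]) (simp add: monom_poly_def mult_single mult.left_commute)
  have "ip (phi * R') (psi * R') = (\<Sum>K\<in>Poly_Mapping.keys R. c K * ip (phi * monom_poly K) (psi * R'))"
    unfolding phiR' by (simp add: ip_sum1 ip_scal1)
  also have "\<dots> = 0"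
    using H unfolding mon_def phi_def[symmetric] psi_def[symmetric] by (simp add: pin[symmetric])
  finally have z: "ip (phi * R') (psi * R') = 0" .
  have "ip (phi * R') (psi * R') = eps * ip (G * R') (G * R')"
    using adjG unfolding adj_def phi_eq by (simp add: mult.assoc)
  with z eps_nz have "ip (G * R') (G * R') = 0" by simp
  then have "G * R' = 0" by (rule ip_self_zero)
  with G_nz R'_nz show False by simp
qed

end
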